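(* Let $(A,m,\Delta)$ be an infinitesimal multiplier bialgebra (see context), and write $[x,y]=xy-yx$ for $x,y\in A$. For $a\in A$ define linear maps $\delta_a,\zeta^a:A\to A\otimes A$ by $$\delta_a(x)=\Delta(x)(a\otimes 1)-\tau\big(\Delta(x)(a\otimes 1)\big),\qquad \zeta^a(x)=(1\otimes a)\Delta(x)-\tau\big((1\otimes a)\Delta(x)\big),$$ where $\tau$ is the flip $u\otimes v\mapsto v\otimes u$. Then for all $a,x,y\in A$, $$\delta_a[x,y]=x\cdot\delta_a(y)-y\cdot\delta_a(x)+\underline{\mathbb B}(a)(x\otimes y)-\underline{\mathbb B}(a)(y\otimes x),$$ $$\zeta^a[x,y]=x\cdot\zeta^a(y)-y\cdot\zeta^a(x)+\overline{\mathbb B}(a)(x\otimes y)-\overline{\mathbb B}(a)(y\otimes x),$$ where $x\cdot(u\otimes v)=[x,u]\otimes v+u\otimes[x,v]$ for $u,v\in A$ (extended linearly), and $\underline{\mathbb B}(a),\overline{\mathbb B}(a)$ are the linear endomorphisms of $A\otimes A$ given by $$\underline{\mathbb B}(a)(x\otimes y)=(x\otimes 1)\,\tau\big(\Delta(y)(a\otimes 1)\big)-\tau\big(\Delta(y)(ax\otimes 1)\big)+(1\otimes y)\big(\Delta(x)(a\otimes 1)\big)-\Delta(x)(ay\otimes 1),$$ $$\overline{\mathbb B}(a)(x\otimes y)=\tau\big((1\otimes xa)\Delta(y)\big)-\tau\big(((1\otimes a)\Delta(y))(x\otimes 1)\big)+(1\otimes ya)\Delta(x)-\big((1\otimes a)\Delta(x)\big)(y\otimes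 1).$$
   Context: All algebras are associative $\mathbb C$-algebras, not necessarily unital, whose product is non-degenerate (if $ab=0$ for all $b$ then $a=0$, and if $ba=0$ for all $b$ then $a=0$). For such an algebra $B$, a left multiplier is a linear $\lambda:B\to B$ with $\lambda(bc)=\lambda(b)c$, a right multiplier is a linear $\rho:B\to B$ with $\rho(bc)=b\rho(c)$, and the multiplier algebra $M(B)$ consists of pairs $(\lambda,\rho)$ of a left and a right multiplier with $b\lambda(c)=\rho(b)c$ for all $b,c$; its product is $(\lambda,\rho)(\lambda',\rho')=(\lambda\circ\lambda',\rho'\circ\rho)$, it has identity $(\mathrm{id},\mathrm{id})$, and $B$ embeds in $M(B)$ via $b\mapsto(\lambda_b,\rho_b)$, $\lambda_b(c)=bc$, $\rho_b(c)=cb$. A coproduct on $A$ is a linear map $\Delta:A\to M(A\otimes A)$ such that (a) $\Delta(b)(a\otimes 1)\in A\otimes A$ and $(1\otimes b)\Delta(a)\in A\otimes A$ for all $a,b\in A$, and (b) with $T_3(a\otimes b)=\Delta(b)(a\otimes 1)$ and $T_4(a\otimes b)=(1\otimes b)\Delta(a)$, one has $(\iota\otimes T_4)\circ(T_3\otimes\iota)=(T_3\otimes\iota)\circ(\iota\otimes T_4)$ on $A\otimes A\otimes A$ ($\iota$ the identity). An infinitesimal multiplier bialgebra is a triple $(A,m,\Delta)$ with $(A,m)$ an associative algebra with non-degenerate product, $\Delta$ a coproduct on $A$, and $\Delta(ab)=\Delta(a)(1\otimes b)+(a\otimes 1)\Delta(b)$ in $M(A\otimes A)$ for all $a,b\in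 A$. Expressions such as $(x\otimes 1)\,\tau(w)$ or $w(y\otimes 1)$ with $w\in A\otimes A$ are products in the algebra $A\otimes A$. The pair $\mathbb B(a)=(\underline{\mathbb B}(a),\overline{\mathbb B}(a))$ is called the bibalanceator of $A$. *)

theory Defs
  imports "HOL-Analysis.Analysis"
begin

definition complex_algebra :: "(complex \<Rightarrow> 'a::ring \<Rightarrow> 'a) \<Rightarrow> bool" where
  "complex_algebra sc \<longleftrightarrow> vector_space sc \<and>
     (\<forall>c x y. sc c (x * y) = sc c x * y) \<and> (\<forall>c x y. sc c (x * y) = x * sc c y)"

definition nondegenerate_product :: "'a::ring itself \<Rightarrow> bool" where
  "nondegenerate_product _ \<longleftrightarrow>
     (\<forall>a::'a. (\<forall>b. a * b = 0) \<longrightarrow> a = 0) \<and> (\<forall>a::'a. (\<forall>b. b * a = 0) \<longrightarrow> a = 0)"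

text \<open>This characterises the algebraic tensor product up to unique isomorphism.\<close>
definition is_tensor_product ::
  "(complex \<Rightarrow> 'u::ab_group_add \<Rightarrow> 'u) \<Rightarrow> (complex \<Rightarrow> 'v::ab_group_add \<Rightarrow> 'v)
   \<Rightarrow> (complex \<Rightarrow> 't::ab_group_add \<Rightarrow> 't) \<Rightarrow> ('u \<Rightarrow> 'v \<Rightarrow> 't) \<Rightarrow> bool" where
  "is_tensor_product sU sV sT tp \<longleftrightarrow>
     vector_space sU \<and> vector_space sV \<and> vector_space sT \<and>
     (\<forall>u u' v. tp (u + u') v = tp u v + tp u' v) \<and>
     (\<forall>u v v'. tp u (v + v') = tp u v + tp u v') \<and>
     (\<forall>c u v. tp (sU c u) v = sT c (tp u v)) \<and>
     (\<forall>c u v. tp u (sV c v) = sT c (tp u v)) \<and>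
     module.span sT {tp u v | u v. True} = UNIV \<and>
     (\<forall>(n::nat) xs ys. inj_on xs {..<n} \<and> \<not> module.dependent sU (xs ` {..<n}) \<and>
        (\<Sum>i<n. tp (xs i) (ys i)) = 0 \<longrightarrow> (\<forall>i<n. ys i = 0))"

definition tlin ::
  "(complex \<Rightarrow> 't::ab_group_add \<Rightarrow> 't) \<Rightarrow> (complex \<Rightarrow> 'w::ab_group_add \<Rightarrow> 'w)
   \<Rightarrow> ('u \<Rightarrow> 'v \<Rightarrow> 't) \<Rightarrow> ('u \<Rightarrow> 'v \<Rightarrow> 'w) \<Rightarrow> 't \<Rightarrow> 'w" where
  "tlin sT sW tp F = (THE h. Vector_Spaces.linear sT sW h \<and> (\<forall>u v. h (tp u v) = F u v))"

definition flip :: "(complex \<Rightarrow> 't::ab_group_add \<Rightarrow> 't) \<Rightarrow> ('a \<Rightarrow> 'a \<Rightarrow> 't) \<Rightarrow> 't \<Rightarrow> 't" where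
  "flip sT tp = tlin sT sT tp (\<lambda>u v. tp v u)"

section \<open>Multiplier algebra M(B) of an algebra B, as pairs (lambda, rho)\<close>

type_synonym 't mult = "('t \<Rightarrow> 't) \<times> ('t \<Rightarrow> 't)"

definition is_multiplier :: "(complex \<Rightarrow> 't::ring \<Rightarrow> 't) \<Rightarrow> 't mult \<Rightarrow> bool" where
  "is_multiplier sT m \<longleftrightarrow>
     Vector_Spaces.linear sT sT (fst m) \<and> Vector_Spaces.linear sT sT (snd m) \<and>
     (\<forall>b c. fst m (b * c) = fst m b * c) \<and>
     (\<forall>b c. snd m (b * c) = b * snd m c) \<and>
     (\<forall>b c. b * fst m c = snd m b * c)"

definition mprod :: "'t mult \<Rightarrow> 't mult \<Rightarrow> 't mult" where
  "mprod m m' = (fst m \<circ> fst m', snd m' \<circ> snd m)"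

definition madd :: "'t::plus mult \<Rightarrow> 't mult \<Rightarrow> 't mult" where
  "madd m m' = (\<lambda>w. fst m w + fst m' w, \<lambda>w. snd m w + snd m' w)"

definition membed :: "'t::times \<Rightarrow> 't mult" where
  "membed b = ((\<lambda>c. b * c), (\<lambda>c. c * b))"

text \<open>For a multiplier lying in (the image of) B, the corresponding element of B.\<close>
definition melem :: "'t::times mult \<Rightarrow> 't" where
  "melem m = (THE w. membed w = m)"

section \<open>The multipliers a (x) 1 and 1 (x) b of A (x) A\<close>

definition ten_one :: "(complex \<Rightarrow> 't::ab_group_add \<Rightarrow> 't) \<Rightarrow> ('a::times \<Rightarrow> 'a \<Rightarrow> 't) \<Rightarrow> 'a \<Rightarrow> 't mult" where
  "ten_one sT tp a = (tlin sT sT tp (\<lambda>u v. tp (a * u) v), tlin sT sT tp (\<lambda>u v. tp (u * a) v))"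

definition one_ten :: "(complex \<Rightarrow> 't::ab_group_add \<Rightarrow> 't) \<Rightarrow> ('a::times \<Rightarrow> 'a \<Rightarrow> 't) \<Rightarrow> 'a \<Rightarrow> 't mult" where
  "one_ten sT tp b = (tlin sT sT tp (\<lambda>u v. tp u (b * v)), tlin sT sT tp (\<lambda>u v. tp u (v * b)))"

text \<open>Delta(x)(a (x) 1) and (1 (x) a) Delta(x), as elements of A (x) A.\<close>
definition DeltaR :: "(complex \<Rightarrow> 't::ring \<Rightarrow> 't) \<Rightarrow> ('a::times \<Rightarrow> 'a \<Rightarrow> 't)
    \<Rightarrow> ('a \<Rightarrow> 't mult) \<Rightarrow> 'a \<Rightarrow> 'a \<Rightarrow> 't" where
  "DeltaR sT tp \<Delta> x a = melem (mprod (\<Delta> x) (ten_one sT tp a))"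

definition DeltaL :: "(complex \<Rightarrow> 't::ring \<Rightarrow> 't) \<Rightarrow> ('a::times \<Rightarrow> 'a \<Rightarrow> 't)
    \<Rightarrow> ('a \<Rightarrow> 't mult) \<Rightarrow> 'a \<Rightarrow> 'a \<Rightarrow> 't" where
  "DeltaL sT tp \<Delta> a x = melem (mprod (one_ten sT tp a) (\<Delta> x))"

definition T3 where
  "T3 sA sT tp \<Delta> = tlin sT sT tp (\<lambda>a b. DeltaR sT tp \<Delta> b a)"

definition T4 where
  "T4 sA sT tp \<Delta> = tlin sT sT tp (\<lambda>a b. DeltaL sT tp \<Delta> b a)"

text \<open>A (x) A (x) A is realised as (A (x) A) (x) A via tp3.
  T3 (x) iota and iota (x) T4 on it:\<close>
definition T3_id where
  "T3_id sA sT sS tp tp3 \<Delta> = tlin sS sS tp3 (\<lambda>w c. tp3 (T3 sA sT tp \<Delta> w) c)"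

definition id_T4 where
  "id_T4 sA sT sS tp tp3 \<Delta> =
     tlin sS sS tp3 (\<lambda>w c. tlin sT sS tp
        (\<lambda>a b. tlin sT sS tp (\<lambda>u v. tp3 (tp a u) v) (T4 sA sT tp \<Delta> (tp b c))) w)"

definition is_coproduct ::
  "(complex \<Rightarrow> 'a::ring \<Rightarrow> 'a) \<Rightarrow> (complex \<Rightarrow> 't::ring \<Rightarrow> 't) \<Rightarrow> (complex \<Rightarrow> 's::ab_group_add \<Rightarrow> 's)
   \<Rightarrow> ('a \<Rightarrow> 'a \<Rightarrow> 't) \<Rightarrow> ('t \<Rightarrow> 'a \<Rightarrow> 's) \<Rightarrow> ('a \<Rightarrow> 't mult) \<Rightarrow> bool" where
  "is_coproduct sA sT sS tp tp3 \<Delta> \<longleftrightarrow>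
     (\<forall>x. is_multiplier sT (\<Delta> x)) \<and>
     (\<forall>c x y. \<Delta> (sA c x + y) =
        (\<lambda>w. sT c (fst (\<Delta> x) w) + fst (\<Delta> y) w, \<lambda>w. sT c (snd (\<Delta> x) w) + snd (\<Delta> y) w)) \<and>
     (\<forall>a b. mprod (\<Delta> b) (ten_one sT tp a) \<in> range membed) \<and>
     (\<forall>a b. mprod (one_ten sT tp b) (\<Delta> a) \<in> range membed) \<and>
     id_T4 sA sT sS tp tp3 \<Delta> \<circ> T3_id sA sT sS tp tp3 \<Delta> =
       T3_id sA sT sS tp tp3 \<Delta> \<circ> id_T4 sA sT sS tp tp3 \<Delta>"

text \<open>Here tp : A x A -> T is
  the tensor product A (x) A (T carrying the algebra structure with
  (a (x) b)(c (x) d) = ac (x) bd), and tp3 : T x A -> S realises A (x) A (x) A.\<close>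
definition inf_mult_bialgebra ::
  "(complex \<Rightarrow> 'a::ring \<Rightarrow> 'a) \<Rightarrow> (complex \<Rightarrow> 't::ring \<Rightarrow> 't) \<Rightarrow> (complex \<Rightarrow> 's::ab_group_add \<Rightarrow> 's)
   \<Rightarrow> ('a \<Rightarrow> 'a \<Rightarrow> 't) \<Rightarrow> ('t \<Rightarrow> 'a \<Rightarrow> 's) \<Rightarrow> ('a \<Rightarrow> 't mult) \<Rightarrow> bool" where
  "inf_mult_bialgebra sA sT sS tp tp3 \<Delta> \<longleftrightarrow>
     complex_algebra sA \<and> nondegenerate_product TYPE('a) \<and>
     is_tensor_product sA sA sT tp \<and> complex_algebra sT \<and>
     (\<forall>a b c d. tp a b * tp c d = tp (a * c) (b * d)) \<and>
     is_tensor_product sT sA sS tp3 \<and>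
     is_coproduct sA sT sS tp tp3 \<Delta> \<and>
     (\<forall>a b. \<Delta> (a * b) = madd (mprod (\<Delta> a) (one_ten sT tp b)) (mprod (ten_one sT tp a) (\<Delta> b)))"

definition commutator :: "'a::ring \<Rightarrow> 'a \<Rightarrow> 'a" where
  "commutator x y = x * y - y * x"

definition dot_act :: "(complex \<Rightarrow> 't::ab_group_add \<Rightarrow> 't) \<Rightarrow> ('a::ring \<Rightarrow> 'a \<Rightarrow> 't) \<Rightarrow> 'a \<Rightarrow> 't \<Rightarrow> 't" where
  "dot_act sT tp x = tlin sT sT tp (\<lambda>u v. tp (commutator x u) v + tp u (commutator x v))"

definition delta_map where
  "delta_map sT tp \<Delta> a x = DeltaR sT tp \<Delta> x a - flip sT tp (DeltaR sT tp \<Delta> x a)"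

definition zeta_map where
  "zeta_map sT tp \<Delta> a x = DeltaL sT tp \<Delta> a x - flip sT tp (DeltaL sT tp \<Delta> a x)"

definition bibal_under where
  "bibal_under sT tp \<Delta> a = tlin sT sT tp (\<lambda>x y.
      fst (ten_one sT tp x) (flip sT tp (DeltaR sT tp \<Delta> y a))
    - flip sT tp (DeltaR sT tp \<Delta> y (a * x))
    + fst (one_ten sT tp y) (DeltaR sT tp \<Delta> x a)
    - DeltaR sT tp \<Delta> x (a * y))"

definition bibal_over where
  "bibal_over sT tp \<Delta> a = tlin sT sT tp (\<lambda>x y.
      flip sT tp (DeltaL sT tp \<Delta> (x * a) y)
    - flip sT tp (snd (ten_one sT tp x) (DeltaL sT tp \<Delta> a y))
    + DeltaL sT tp \<Delta> (y * a) x
    - snd (ten_one sT tp y) (DeltaL sT tp \<Delta> a x))"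

end

theory Submission
  imports Defs
begin

locale imb =
  fixes sA :: "complex \<Rightarrow> 'a::ring \<Rightarrow> 'a" and sT :: "complex \<Rightarrow> 't::ring \<Rightarrow> 't"
    and sS :: "complex \<Rightarrow> 's::ab_group_add \<Rightarrow> 's"
    and tp :: "'a \<Rightarrow> 'a \<Rightarrow> 't" and tp3 :: "'t \<Rightarrow> 'a \<Rightarrow> 's" and \<Delta> :: "'a \<Rightarrow> 't mult"
  assumes imb: "inf_mult_bialgebra sA sT sS tp tp3 \<Delta>"

sublocale imb \<subseteq> A: vector_space sA
  using imb unfolding inf_mult_bialgebra_def is_tensor_product_def by auto
sublocale imb \<subseteq> T: vector_space sT
  using imb unfolding inf_mult_bialgebra_def is_tensor_product_def by auto

context imb begin

lemma tens: "is_tensor_product sA sA sT tp"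
  using imb unfolding inf_mult_bialgebra_def by auto

lemma tp_addL: "tp (u + u') v = tp u v + tp u' v"
  and tp_addR: "tp u (v + v') = tp u v + tp u v'"
  and tp_scL: "tp (sA c u) v = sT c (tp u v)"
  and tp_scR: "tp u (sA c v) = sT c (tp u v)"
  using tens unfolding is_tensor_product_def by auto

lemma tp_span: "T.span {tp u v | u v. True} = UNIV"
  using tens unfolding is_tensor_product_def by auto

lemma tp_indep: assumes "inj_on xs {..<(n::nat)}" "\<not> A.dependent (xs ` {..<n})"
        "(\<Sum>i<n. tp (xs i) (ys i)) = 0" "i < n" shows "ys i = 0"
proof -
  have H: "\<forall>(n::nat) xs ys. inj_on xs {..<n} \<and> \<not> A.dependent (xs ` {..<n}) \<and>
        (\<Sum>i<n. tp (xs i) (ys i)) = 0 \<longrightarrow> (\<forall>i<n. ys i = 0)"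
    using tens unfolding is_tensor_product_def by (elim conjE) assumption
  show ?thesis using spec[OF spec[OF spec[OF H, of n], of xs], of ys] assms by blast
qed

lemma tp_0L[simp]: "tp 0 v = 0" using tp_addL[of 0 0 v] by simp
lemma tp_0R[simp]: "tp u 0 = 0" using tp_addR[of u 0 0] by simp
lemma tp_negL: "tp (- u) v = - tp u v" using tp_addL[of "-u" u v] by (simp add: eq_neg_iff_add_eq_0)
lemma tp_negR: "tp u (- v) = - tp u v" using tp_addR[of u "-v" v] by (simp add: eq_neg_iff_add_eq_0)
lemma tp_diffL: "tp (u - u') v = tp u v - tp u' v" using tp_addL[of u "-u'" v] by (simp add: tp_negL)
lemma tp_diffR: "tp u (v - v') = tp u v - tp u v'" using tp_addR[of u v "-v'"] by (simp add: tp_negR)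

lemma additive_sum: fixes f :: "'x::ab_group_add \<Rightarrow> 'y::ab_group_add" shows "(\<And>x y. f (x + y) = f x + f y) \<Longrightarrow> f (sum g S) = (\<Sum>x\<in>S. f (g x))"
proof -
  assume a: "\<And>x y. f (x + y) = f x + f y"
  interpret additive f by unfold_locales (rule a)
  show ?thesis by (rule sum)
qed

lemma tp_sumL: "tp (sum g S) v = (\<Sum>x\<in>S. tp (g x) v)"
  by (rule additive_sum[where f="\<lambda>u. tp u v"]) (rule tp_addL)
lemma tp_sumR: "tp u (sum g S) = (\<Sum>x\<in>S. tp u (g x))"
  by (rule additive_sum[where f="\<lambda>v. tp u v"]) (rule tp_addR)

definition BA where "BA = (SOME B. A.independent B \<and> A.span B = UNIV)"

lemma BA: "A.independent BA" "A.span BA = UNIV"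
proof -
  obtain B where "A.independent B" "UNIV \<subseteq> A.span B"
    using A.basis_exists[of UNIV] by blast
  then have "\<exists>B. A.independent B \<and> A.span B = UNIV" by auto
  from someI_ex[OF this] show "A.independent BA" "A.span BA = UNIV" unfolding BA_def by auto
qed

definition rA where "rA u = A.representation BA u"

lemma rA_fin: "finite {b. rA u b \<noteq> 0}"
  unfolding rA_def by (rule A.finite_representation)
lemma rA_sub: "{b. rA u b \<noteq> 0} \<subseteq> BA"
proof
  fix b assume "b \<in> {b. rA u b \<noteq> 0}"
  then show "b \<in> BA" using A.representation_ne_zero[of BA u b] unfolding rA_def by simp
qed

lemma rA_sum: assumes "finite S" "{b. rA u b \<noteq> 0} \<subseteq> S"
  shows "(\<Sum>b\<in>S. sA (rA u b) b) = u"
proof -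
  have "(\<Sum>b\<in>{b. rA u b \<noteq> 0}. sA (rA u b) b) = (\<Sum>b\<in>S. sA (rA u b) b)"
    by (rule sum.mono_neutral_left) (use assms in auto)
  then have "(\<Sum>b\<in>S. sA (rA u b) b) = (\<Sum>b\<in>{b. rA u b \<noteq> 0}. sA (rA u b) b)" by simp
  also have "\<dots> = u" unfolding rA_def
    by (rule A.sum_nonzero_representation_eq) (use BA in auto)
  finally show ?thesis .
qed

lemma BA_indep: assumes "finite S" "S \<subseteq> BA" "(\<Sum>b\<in>S. sA (c b) b) = 0" "b \<in> S" shows "c b = 0"
  using A.independentD[OF BA(1) assms] .

lemma Z1: assumes S: "finite S" "S \<subseteq> BA" and eq: "(\<Sum>b\<in>S. tp b (y b)) = 0" and b: "b \<in> S"
  shows "y b = 0"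
proof -
  obtain h where h: "bij_betw h {0..<card S} S" using ex_bij_betw_nat_finite[OF S(1)] by blast
  have h': "bij_betw h {..<card S} S" using h by (simp only: atLeast0LessThan)
  have inj: "inj_on h {..<card S}" using h' by (rule bij_betw_imp_inj_on)
  have img: "h ` {..<card S} = S" using h' by (rule bij_betw_imp_surj_on)
  have ind: "\<not> A.dependent (h ` {..<card S})" unfolding img by (rule A.independent_mono[OF BA(1) S(2)])
  have "(\<Sum>i<card S. tp (h i) (y (h i))) = (\<Sum>b\<in>S. tp b (y b))"
    by (rule sum.reindex_bij_betw[OF h'])
  then have z: "(\<Sum>i<card S. tp (h i) ((y \<circ> h) i)) = 0" unfolding eq o_def .
  have "b \<in> h ` {..<card S}" using b img by simp
  then obtain i where i: "i < card S" "b = h i" by blast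
  have "(y \<circ> h) i = 0" by (rule tp_indep[OF inj ind z i(1)])
  then show ?thesis using i(2) by simp
qed


definition rep where
  "rep t y \<longleftrightarrow> finite {b. y b \<noteq> 0} \<and> {b. y b \<noteq> 0} \<subseteq> BA \<and> t = (\<Sum>b\<in>{b. y b \<noteq> 0}. tp b (y b))"

lemma rep_sup: assumes "rep t y" "finite S" "{b. y b \<noteq> 0} \<subseteq> S" shows "t = (\<Sum>b\<in>S. tp b (y b))"
proof -
  have "(\<Sum>b\<in>{b. y b \<noteq> 0}. tp b (y b)) = (\<Sum>b\<in>S. tp b (y b))"
    by (rule sum.mono_neutral_left) (use assms in \<open>auto simp: rep_def\<close>)
  then show ?thesis using assms(1) unfolding rep_def by simp
qed

lemma repI: assumes "finite S" "S \<subseteq> BA" "\<And>b. b \<notin> S \<Longrightarrow> y b = 0" "t = (\<Sum>b\<in>S. tp b (y b))"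
  shows "rep t y"
proof -
  have sub: "{b. y b \<noteq> 0} \<subseteq> S" using assms(3) by blast
  have "(\<Sum>b\<in>{b. y b \<noteq> 0}. tp b (y b)) = (\<Sum>b\<in>S. tp b (y b))"
    by (rule sum.mono_neutral_left) (use assms sub in auto)
  then show ?thesis unfolding rep_def using assms sub finite_subset by auto
qed

lemma rep_unique: assumes "rep t y1" "rep t y2" shows "y1 = y2"
proof
  fix b
  let ?S = "{b. y1 b \<noteq> 0} \<union> {b. y2 b \<noteq> 0}"
  have fin: "finite ?S" and sub: "?S \<subseteq> BA" using assms unfolding rep_def by auto
  have e1: "t = (\<Sum>b\<in>?S. tp b (y1 b))" by (rule rep_sup[OF assms(1)]) (use fin in auto)
  have e2: "t = (\<Sum>b\<in>?S. tp b (y2 b))" by (rule rep_sup[OF assms(2)]) (use fin in auto)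
  have "(\<Sum>b\<in>?S. tp b (y1 b - y2 b)) = 0"
    by (simp add: tp_diffR sum_subtractf flip: e1 e2)
  note z = this
  have "y1 b - y2 b = 0" if "b \<in> ?S" for b using Z1[OF fin sub _ that, of "\<lambda>b. y1 b - y2 b"] z by simp
  then show "y1 b = y2 b" by (cases "b \<in> ?S") auto
qed

lemma rep_zero: "rep 0 (\<lambda>b. 0)"
  unfolding rep_def by simp

lemma rep_add: assumes "rep t y1" "rep t' y2" shows "rep (t + t') (\<lambda>b. y1 b + y2 b)"
proof -
  let ?S = "{b. y1 b \<noteq> 0} \<union> {b. y2 b \<noteq> 0}"
  have fin: "finite ?S" and sub: "?S \<subseteq> BA" using assms unfolding rep_def by auto
  have e1: "t = (\<Sum>b\<in>?S. tp b (y1 b))" by (rule rep_sup[OF assms(1)]) (use fin in auto)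
  have e2: "t' = (\<Sum>b\<in>?S. tp b (y2 b))" by (rule rep_sup[OF assms(2)]) (use fin in auto)
  show ?thesis
  proof (rule repI[OF fin sub])
    show "t + t' = (\<Sum>b\<in>?S. tp b (y1 b + y2 b))"
      by (simp add: tp_addR sum.distrib flip: e1 e2)
  qed auto
qed

lemma rep_scale: assumes "rep t y" shows "rep (sT c t) (\<lambda>b. sA c (y b))"
proof -
  let ?S = "{b. y b \<noteq> 0}"
  have fin: "finite ?S" and sub: "?S \<subseteq> BA" using assms unfolding rep_def by auto
  have e1: "t = (\<Sum>b\<in>?S. tp b (y b))" by (rule rep_sup[OF assms(1)]) (use fin in auto)
  show ?thesis
  proof (rule repI[OF fin sub])
    show "sT c t = (\<Sum>b\<in>?S. tp b (sA c (y b)))"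
      by (subst e1) (simp add: tp_scR T.scale_sum_right)
  qed auto
qed

lemma rep_tp: "rep (tp u v) (\<lambda>b. sA (rA u b) v)"
proof (rule repI[OF rA_fin rA_sub])
  have "tp u v = tp (\<Sum>b\<in>{b. rA u b \<noteq> 0}. sA (rA u b) b) v" using rA_sum[OF rA_fin order_refl] by simp
  also have "\<dots> = (\<Sum>b\<in>{b. rA u b \<noteq> 0}. tp b (sA (rA u b) v))"
    by (simp add: tp_sumL tp_scL tp_scR)
  finally show "tp u v = (\<Sum>b\<in>{b. rA u b \<noteq> 0}. tp b (sA (rA u b) v))" .
qed auto

lemma rep_ex: "\<exists>y. rep t y"
proof -
  have "t \<in> T.span {tp u v | u v. True}" using tp_span by simp
  then show ?thesis
  proof (induct rule: T.span_induct)
    case base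
    show ?case unfolding T.subspace_def
      using rep_zero rep_add rep_scale by blast
  next
    case (step x)
    then show ?case using rep_tp by blast
  qed
qed

definition crd where "crd t = (THE y. rep t y)"

lemma crd_eq: "rep t y \<Longrightarrow> crd t = y"
  unfolding crd_def using rep_unique by blast

lemma crd: "rep t (crd t)"
  using rep_ex crd_eq by metis

lemma crd_fin: "finite {b. crd t b \<noteq> 0}" and crd_sub: "{b. crd t b \<noteq> 0} \<subseteq> BA"
  using crd[of t] unfolding rep_def by auto

lemma crd_sum: "finite S \<Longrightarrow> {b. crd t b \<noteq> 0} \<subseteq> S \<Longrightarrow> t = (\<Sum>b\<in>S. tp b (crd t b))"
  by (rule rep_sup[OF crd])

lemma crd_add: "crd (t + t') = (\<lambda>b. crd t b + crd t' b)"
  by (rule crd_eq, rule rep_add[OF crd crd])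
lemma crd_scale: "crd (sT c t) = (\<lambda>b. sA c (crd t b))"
  by (rule crd_eq, rule rep_scale[OF crd])
lemma crd_tp: "crd (tp u v) = (\<lambda>b. sA (rA u b) v)"
  by (rule crd_eq, rule rep_tp)


definition bilin :: "(complex \<Rightarrow> 'w::ab_group_add \<Rightarrow> 'w) \<Rightarrow> ('a \<Rightarrow> 'a \<Rightarrow> 'w) \<Rightarrow> bool" where
  "bilin sW F \<longleftrightarrow> vector_space sW \<and> (\<forall>u u' v. F (u + u') v = F u v + F u' v) \<and>
     (\<forall>u v v'. F u (v + v') = F u v + F u v') \<and>
     (\<forall>c u v. F (sA c u) v = sW c (F u v)) \<and> (\<forall>c u v. F u (sA c v) = sW c (F u v))"

definition ext :: "('a \<Rightarrow> 'a \<Rightarrow> 'w::ab_group_add) \<Rightarrow> 't \<Rightarrow> 'w" where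
  "ext F t = (\<Sum>b\<in>{b. crd t b \<noteq> 0}. F b (crd t b))"

lemma bilin_0R: "bilin sW F \<Longrightarrow> F u 0 = 0"
  unfolding bilin_def by (metis add_cancel_right_right add_0)

lemma ext_sup: assumes "bilin sW F" "finite S" "{b. crd t b \<noteq> 0} \<subseteq> S"
  shows "ext F t = (\<Sum>b\<in>S. F b (crd t b))"
  unfolding ext_def by (rule sum.mono_neutral_left) (use assms bilin_0R[OF assms(1)] in auto)

lemma ext_add: assumes F: "bilin sW F" shows "ext F (t + t') = ext F t + ext F t'"
proof -
  let ?S = "{b. crd t b \<noteq> 0} \<union> {b. crd t' b \<noteq> 0}"
  have fin: "finite ?S" using crd_fin by auto
  have s: "{b. crd (t + t') b \<noteq> 0} \<subseteq> ?S" unfolding crd_add by auto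
  have "ext F (t + t') = (\<Sum>b\<in>?S. F b (crd (t + t') b))" by (rule ext_sup[OF F fin s])
  also have "\<dots> = (\<Sum>b\<in>?S. F b (crd t b)) + (\<Sum>b\<in>?S. F b (crd t' b))"
    using F unfolding crd_add bilin_def by (simp add: sum.distrib)
  also have "\<dots> = ext F t + ext F t'"
    by (simp add: ext_sup[OF F fin])
  finally show ?thesis .
qed

lemma ext_scale: assumes F: "bilin sW F" shows "ext F (sT c t) = sW c (ext F t)"
proof -
  interpret W: vector_space sW using F unfolding bilin_def by auto
  let ?S = "{b. crd t b \<noteq> 0}"
  have s: "{b. crd (sT c t) b \<noteq> 0} \<subseteq> ?S" unfolding crd_scale by auto
  have "ext F (sT c t) = (\<Sum>b\<in>?S. F b (crd (sT c t) b))" by (rule ext_sup[OF F crd_fin s])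
  also have "\<dots> = sW c (\<Sum>b\<in>?S. F b (crd t b))"
    using F unfolding crd_scale bilin_def by (simp add: W.scale_sum_right)
  also have "\<dots> = sW c (ext F t)" unfolding ext_def ..
  finally show ?thesis .
qed

lemma ext_tp: assumes F: "bilin sW F" shows "ext F (tp u v) = F u v"
proof -
  let ?S = "{b. rA u b \<noteq> 0}"
  have s: "{b. crd (tp u v) b \<noteq> 0} \<subseteq> ?S" unfolding crd_tp by auto
  have "ext F (tp u v) = (\<Sum>b\<in>?S. F b (sA (rA u b) v))"
    using ext_sup[OF F rA_fin s] unfolding crd_tp .
  also have "\<dots> = (\<Sum>b\<in>?S. F (sA (rA u b) b) v)"
    using F unfolding bilin_def by simp
  also have "\<dots> = F (\<Sum>b\<in>?S. sA (rA u b) b) v"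
    by (rule additive_sum[symmetric]) (use F in \<open>simp add: bilin_def\<close>)
  also have "\<dots> = F u v" using rA_sum[OF rA_fin order_refl] by simp
  finally show ?thesis .
qed

lemma lin_eq: assumes "Vector_Spaces.linear sT sW h1" "Vector_Spaces.linear sT sW h2"
  "\<And>u v. h1 (tp u v) = h2 (tp u v)" shows "h1 = h2"
proof
  fix t
  have a1: "\<And>x y. h1 (x + y) = h1 x + h1 y" and a2: "\<And>x y. h2 (x + y) = h2 x + h2 y"
    using assms(1,2) unfolding Vector_Spaces.linear_iff by auto
  have "t = (\<Sum>b\<in>{b. crd t b \<noteq> 0}. tp b (crd t b))" by (rule crd_sum[OF crd_fin order_refl])
  then have "h1 t = (\<Sum>b\<in>{b. crd t b \<noteq> 0}. h1 (tp b (crd t b)))"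
    "h2 t = (\<Sum>b\<in>{b. crd t b \<noteq> 0}. h2 (tp b (crd t b)))"
    using additive_sum[of h1, OF a1] additive_sum[of h2, OF a2] by metis+
  then show "h1 t = h2 t" using assms(3) by simp
qed

lemma tlin: assumes F: "bilin sW F"
  shows "Vector_Spaces.linear sT sW (tlin sT sW tp F)" "\<And>u v. tlin sT sW tp F (tp u v) = F u v"
proof -
  have W: "vector_space sW" using F unfolding bilin_def by auto
  have l: "Vector_Spaces.linear sT sW (ext F)"
    unfolding Vector_Spaces.linear_iff using W T.vector_space_axioms ext_add[OF F] ext_scale[OF F] by auto
  have ex: "\<exists>!h. Vector_Spaces.linear sT sW h \<and> (\<forall>u v. h (tp u v) = F u v)"
  proof (rule ex1I[of _ "ext F"])
    show "Vector_Spaces.linear sT sW (ext F) \<and> (\<forall>u v. ext F (tp u v) = F u v)"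
      using l ext_tp[OF F] by auto
    fix h assume "Vector_Spaces.linear sT sW h \<and> (\<forall>u v. h (tp u v) = F u v)"
    then show "h = ext F" using lin_eq[of sW h "ext F"] l ext_tp[OF F] by auto
  qed
  have "Vector_Spaces.linear sT sW (tlin sT sW tp F) \<and> (\<forall>u v. tlin sT sW tp F (tp u v) = F u v)"
    unfolding tlin_def by (rule theI'[OF ex])
  then show "Vector_Spaces.linear sT sW (tlin sT sW tp F)" "\<And>u v. tlin sT sW tp F (tp u v) = F u v"
    by auto
qed


lemma caA: "sA c (x * y) = sA c x * y" "sA c (x * y) = x * sA c y"
  using imb unfolding inf_mult_bialgebra_def complex_algebra_def by auto
lemma caT: "sT c (x * y) = sT c x * y" "sT c (x * y) = x * sT c y"
  using imb unfolding inf_mult_bialgebra_def complex_algebra_def by auto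
lemma nondegA: fixes a :: 'a assumes "\<And>b. a * b = 0" shows "a = 0"
proof -
  have "\<forall>b. a * b = 0" using assms by simp
  then show ?thesis using imb unfolding inf_mult_bialgebra_def nondegenerate_product_def by blast
qed
lemma tp_mult: "tp a b * tp c d = tp (a * c) (b * d)"
  using imb unfolding inf_mult_bialgebra_def by blast

lemma Z2: assumes S: "finite S" "S \<subseteq> BA" and eq: "(\<Sum>e\<in>S. tp (z e) e) = 0" and e: "e \<in> S"
  shows "z e = 0"
proof -
  define S3 where "S3 = (\<Union>e\<in>S. {b. rA (z e) b \<noteq> 0})"
  have fin3: "finite S3" unfolding S3_def using S(1) rA_fin by blast
  have sub3: "S3 \<subseteq> BA" unfolding S3_def using rA_sub by blast
  have ze: "z e' = (\<Sum>b\<in>S3. sA (rA (z e') b) b)" if "e' \<in> S" for e'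
    by (rule rA_sum[symmetric, OF fin3]) (use that in \<open>auto simp: S3_def\<close>)
  have "0 = (\<Sum>e\<in>S. tp (\<Sum>b\<in>S3. sA (rA (z e) b) b) e)"
    using eq ze by (metis (no_types, lifting) sum.cong)
  also have "\<dots> = (\<Sum>e\<in>S. \<Sum>b\<in>S3. tp b (sA (rA (z e) b) e))"
    by (simp add: tp_sumL tp_scL tp_scR)
  also have "\<dots> = (\<Sum>b\<in>S3. \<Sum>e\<in>S. tp b (sA (rA (z e) b) e))"
    by (rule sum.swap)
  also have "\<dots> = (\<Sum>b\<in>S3. tp b (\<Sum>e\<in>S. sA (rA (z e) b) e))"
    by (simp add: tp_sumR)
  finally have z3: "(\<Sum>b\<in>S3. tp b (\<Sum>e\<in>S. sA (rA (z e) b) e)) = 0" by simp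
  have "rA (z e) b = 0" if b: "b \<in> S3" for b
  proof -
    have "(\<Sum>e\<in>S. sA (rA (z e) b) e) = 0"
      using Z1[OF fin3 sub3 z3 b] .
    then show ?thesis using BA_indep[OF S, of "\<lambda>e. rA (z e) b" e] e by simp
  qed
  then have "z e = (\<Sum>b\<in>S3. sA 0 b)" using ze[OF e] by simp
  then show ?thesis by simp
qed

lemma nondegT: fixes w :: 't assumes w: "\<And>t. w * t = 0" shows "w = 0"
proof -
  define y where "y = crd w"
  define S where "S = {b. y b \<noteq> 0}"
  have fin: "finite S" and sub: "S \<subseteq> BA" unfolding S_def y_def using crd_fin crd_sub by auto
  have wS: "w = (\<Sum>b\<in>S. tp b (y b))" unfolding S_def y_def by (rule crd_sum[OF crd_fin order_refl])
  have yd: "y b * d = 0" if b: "b \<in> S" for b d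
  proof -
    define S2 where "S2 = (\<Union>b\<in>S. {f. rA (y b * d) f \<noteq> 0})"
    have fin2: "finite S2" unfolding S2_def using fin rA_fin by blast
    have sub2: "S2 \<subseteq> BA" unfolding S2_def using rA_sub by blast
    have yb: "y b' * d = (\<Sum>f\<in>S2. sA (rA (y b' * d) f) f)" if "b' \<in> S" for b'
      by (rule rA_sum[symmetric, OF fin2]) (use that in \<open>auto simp: S2_def\<close>)
    have cz: "(\<Sum>b\<in>S. sA (rA (y b * d) f) b) * c = 0" if f: "f \<in> S2" for f c
    proof -
      have "0 = w * tp c d" using w by simp
      also have "\<dots> = (\<Sum>b\<in>S. tp (b * c) (y b * d))"
        unfolding wS by (simp add: sum_distrib_right tp_mult)
      also have "\<dots> = (\<Sum>b\<in>S. tp (b * c) (\<Sum>f\<in>S2. sA (rA (y b * d) f) f))"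
        using yb by (metis (no_types, lifting) sum.cong)
      also have "\<dots> = (\<Sum>b\<in>S. \<Sum>f\<in>S2. tp (sA (rA (y b * d) f) (b * c)) f)"
        by (simp add: tp_sumR tp_scL tp_scR)
      also have "\<dots> = (\<Sum>f\<in>S2. \<Sum>b\<in>S. tp (sA (rA (y b * d) f) (b * c)) f)"
        by (rule sum.swap)
      also have "\<dots> = (\<Sum>f\<in>S2. tp ((\<Sum>b\<in>S. sA (rA (y b * d) f) b) * c) f)"
        by (simp add: tp_sumL sum_distrib_right caA(1))
      finally have "(\<Sum>f\<in>S2. tp ((\<Sum>b\<in>S. sA (rA (y b * d) f) b) * c) f) = 0" by simp
      from Z2[OF fin2 sub2 this f] show ?thesis .
    qed
    have "rA (y b * d) f = 0" if f: "f \<in> S2" for f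
    proof -
      have "(\<Sum>b\<in>S. sA (rA (y b * d) f) b) = 0" by (rule nondegA) (rule cz[OF f])
      then show ?thesis using BA_indep[OF fin sub, of "\<lambda>b. rA (y b * d) f" b] b by simp
    qed
    then have "y b * d = (\<Sum>f\<in>S2. sA 0 f)" using yb[OF b] by simp
    then show ?thesis by simp
  qed
  have "y b = 0" if "b \<in> S" for b by (rule nondegA) (rule yd[OF that])
  then show ?thesis unfolding wS by simp
qed

lemma membed_inj: "membed (w::'t) = membed w' \<Longrightarrow> w = w'"
proof -
  assume "membed w = membed w'"
  then have "\<And>t. w * t = w' * t" unfolding membed_def by (metis fst_conv)
  then have "\<And>t. (w - w') * t = 0" by (simp add: left_diff_distrib)
  then have "w - w' = 0" by (rule nondegT)
  then show ?thesis by simp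
qed

lemma membed_melem: "(m::'t mult) \<in> range membed \<Longrightarrow> membed (melem m) = m"
proof -
  assume "m \<in> range membed"
  then obtain w where w: "membed w = m" by blast
  have "melem m = w" unfolding melem_def
    by (rule the_equality) (use w membed_inj in auto)
  then show ?thesis using w by simp
qed


lemma linI: "(\<And>a b. h (a + b) = h a + h b) \<Longrightarrow> (\<And>c a. h (sT c a) = sT c (h a)) \<Longrightarrow> Vector_Spaces.linear sT sT h"
  unfolding Vector_Spaces.linear_iff using T.vector_space_axioms by auto

lemma linD0: assumes "Vector_Spaces.linear sT sT h"
  shows "h (p + q) = h p + h q" "h (sT c p) = sT c (h p)"
  using assms unfolding Vector_Spaces.linear_iff by auto

lemma linD: assumes "Vector_Spaces.linear sT sT h"
  shows "h (a + b) = h a + h b" "h (sT c a) = sT c (h a)" "h 0 = 0" "h (- a) = - h a" "h (a - b) = h a - h b"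
proof -
  note ad = linD0(1)[OF assms]
  show "h (a + b) = h a + h b" "h (sT c a) = sT c (h a)" using linD0[OF assms] by auto
  have z: "h 0 = 0" using ad[of 0 0] by simp
  then show "h 0 = 0" .
  have n: "h (- p) = - h p" for p using ad[of "- p" p] z by (simp add: eq_neg_iff_add_eq_0)
  then show "h (- a) = - h a" .
  show "h (a - b) = h a - h b" using ad[of a "- b"] n[of b] by simp
qed

lemma lin_comp: "Vector_Spaces.linear sT sT h \<Longrightarrow> Vector_Spaces.linear sT sT g \<Longrightarrow> Vector_Spaces.linear sT sT (\<lambda>t. h (g t))"
  by (rule linI) (simp_all add: linD)

lemma lin_mulL: "Vector_Spaces.linear sT sT (\<lambda>t. s * t)"
  by (rule linI) (simp_all add: distrib_left caT(2)[symmetric])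
lemma lin_mulR: "Vector_Spaces.linear sT sT (\<lambda>t. t * s)"
  by (rule linI) (simp_all add: distrib_right caT(1)[symmetric])

lemma eq_by_tp: assumes "Vector_Spaces.linear sT sT hA" "Vector_Spaces.linear sT sT hB"
   "\<And>u v. hA (tp u v) = hB (tp u v)" shows "hA t = hB t"
proof -
  have "hA = hB" by (rule lin_eq) (use assms in auto)
  then show ?thesis by simp
qed

lemma bilinT: assumes "\<And>u u' v. F (u + u') v = F u v + F u' v" "\<And>u v v'. F u (v + v') = F u v + F u v'"
  "\<And>c u v. F (sA c u) v = sT c (F u v)" "\<And>c u v. F u (sA c v) = sT c (F u v)"
  shows "bilin sT F"
  unfolding bilin_def using assms T.vector_space_axioms by blast

abbreviation "Lx x \<equiv> fst (ten_one sT tp x)"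
abbreviation "Rx x \<equiv> snd (ten_one sT tp x)"
abbreviation "Ly x \<equiv> fst (one_ten sT tp x)"
abbreviation "Ry x \<equiv> snd (one_ten sT tp x)"
abbreviation "fl \<equiv> flip sT tp"
abbreviation "dot x \<equiv> dot_act sT tp x"

lemma bl_Lx: "bilin sT (\<lambda>u v. tp (x * u) v)"
  by (rule bilinT) (simp_all add: distrib_left tp_addL tp_addR caA(2)[symmetric] tp_scL tp_scR)
lemma bl_Rx: "bilin sT (\<lambda>u v. tp (u * x) v)"
  by (rule bilinT) (simp_all add: distrib_right tp_addL tp_addR caA(1)[symmetric] tp_scL tp_scR)
lemma bl_Ly: "bilin sT (\<lambda>u v. tp u (x * v))"
  by (rule bilinT) (simp_all add: distrib_left tp_addL tp_addR caA(2)[symmetric] tp_scL tp_scR)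
lemma bl_Ry: "bilin sT (\<lambda>u v. tp u (v * x))"
  by (rule bilinT) (simp_all add: distrib_right tp_addL tp_addR caA(1)[symmetric] tp_scL tp_scR)
lemma bl_fl: "bilin sT (\<lambda>u v. tp v u)"
  by (rule bilinT) (simp_all add: tp_addL tp_addR tp_scL tp_scR)
lemma bl_dot: "bilin sT (\<lambda>u v. tp (commutator x u) v + tp u (commutator x v))"
  by (rule bilinT) (simp_all add: commutator_def distrib_left distrib_right tp_addL tp_addR tp_diffL tp_diffR
      caA(1)[symmetric] caA(2)[symmetric] tp_scL tp_scR T.scale_right_distrib T.scale_right_diff_distrib algebra_simps)

lemma Lx_lin: "Vector_Spaces.linear sT sT (Lx x)" and Lx_tp: "Lx x (tp u v) = tp (x * u) v"
  using tlin[OF bl_Lx] unfolding ten_one_def by auto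
lemma Rx_lin: "Vector_Spaces.linear sT sT (Rx x)" and Rx_tp: "Rx x (tp u v) = tp (u * x) v"
  using tlin[OF bl_Rx] unfolding ten_one_def by auto
lemma Ly_lin: "Vector_Spaces.linear sT sT (Ly x)" and Ly_tp: "Ly x (tp u v) = tp u (x * v)"
  using tlin[OF bl_Ly] unfolding one_ten_def by auto
lemma Ry_lin: "Vector_Spaces.linear sT sT (Ry x)" and Ry_tp: "Ry x (tp u v) = tp u (v * x)"
  using tlin[OF bl_Ry] unfolding one_ten_def by auto
lemma fl_lin: "Vector_Spaces.linear sT sT fl" and fl_tp: "fl (tp u v) = tp v u"
  using tlin[OF bl_fl] unfolding flip_def by auto
lemma dot_lin: "Vector_Spaces.linear sT sT (dot x)" and dot_tp: "dot x (tp u v) = tp (commutator x u) v + tp u (commutator x v)"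
  using tlin[OF bl_dot] unfolding dot_act_def by auto

lemmas Lx_l = linD[OF Lx_lin] and Rx_l = linD[OF Rx_lin] and Ly_l = linD[OF Ly_lin]
  and Ry_l = linD[OF Ry_lin] and fl_l = linD[OF fl_lin] and dot_l = linD[OF dot_lin]

lemmas tp_simps = Lx_tp Rx_tp Ly_tp Ry_tp fl_tp dot_tp tp_mult

lemma Ly_Lx: "Ly y (Lx x t) = Lx x (Ly y t)"
  by (rule eq_by_tp) (simp_all add: lin_comp Lx_lin Ly_lin tp_simps)
lemma Lx_mult: "Lx (a * x) t = Lx a (Lx x t)"
  by (rule eq_by_tp) (simp_all add: lin_comp Lx_lin tp_simps mult.assoc)
lemma Ly_mult: "Ly (x * a) t = Ly x (Ly a t)"
  by (rule eq_by_tp) (simp_all add: lin_comp Ly_lin tp_simps mult.assoc)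
lemma fl_Lx: "fl (Lx x t) = Ly x (fl t)"
  by (rule eq_by_tp) (simp_all add: lin_comp Lx_lin Ly_lin fl_lin tp_simps)
lemma fl_Ly: "fl (Ly x t) = Lx x (fl t)"
  by (rule eq_by_tp) (simp_all add: lin_comp Lx_lin Ly_lin fl_lin tp_simps)
lemma fl_Rx: "fl (Rx x t) = Ry x (fl t)"
  by (rule eq_by_tp) (simp_all add: lin_comp Rx_lin Ry_lin fl_lin tp_simps)
lemma fl_Ry: "fl (Ry x t) = Rx x (fl t)"
  by (rule eq_by_tp) (simp_all add: lin_comp Rx_lin Ry_lin fl_lin tp_simps)

lemma lin_add_fun: "Vector_Spaces.linear sT sT h \<Longrightarrow> Vector_Spaces.linear sT sT g \<Longrightarrow> Vector_Spaces.linear sT sT (\<lambda>t. h t + g t)"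
  by (rule linI) (simp_all add: linD T.scale_right_distrib)
lemma lin_diff_fun: "Vector_Spaces.linear sT sT h \<Longrightarrow> Vector_Spaces.linear sT sT g \<Longrightarrow> Vector_Spaces.linear sT sT (\<lambda>t. h t - g t)"
  by (rule linI) (simp_all add: linD T.scale_right_diff_distrib)
lemma lin_scale_fun: "Vector_Spaces.linear sT sT h \<Longrightarrow> Vector_Spaces.linear sT sT (\<lambda>t. sT c (h t))"
  by (rule linI) (simp_all add: linD T.scale_right_distrib)

lemma dot_eq: "dot x t = Lx x t - Rx x t + Ly x t - Ry x t"
  by (rule eq_by_tp[where hA="dot x"]) (simp_all add: lin_add_fun lin_diff_fun Lx_lin Rx_lin Ly_lin Ry_lin dot_lin
        tp_simps commutator_def tp_diffL tp_diffR)

lemma Lx_padd: "Lx (x + x') t = Lx x t + Lx x' t"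
  by (rule eq_by_tp) (simp_all add: lin_add_fun Lx_lin tp_simps distrib_right tp_addL)
lemma Lx_pscale: "Lx (sA c x) t = sT c (Lx x t)"
  by (rule eq_by_tp) (simp_all add: lin_scale_fun Lx_lin tp_simps caA(1)[symmetric] tp_scL)
lemma Rx_padd: "Rx (x + x') t = Rx x t + Rx x' t"
  by (rule eq_by_tp) (simp_all add: lin_add_fun Rx_lin tp_simps distrib_left tp_addL)
lemma Rx_pscale: "Rx (sA c x) t = sT c (Rx x t)"
  by (rule eq_by_tp) (simp_all add: lin_scale_fun Rx_lin tp_simps caA(2)[symmetric] tp_scL)
lemma Ly_padd: "Ly (x + x') t = Ly x t + Ly x' t"
  by (rule eq_by_tp) (simp_all add: lin_add_fun Ly_lin tp_simps distrib_right tp_addR)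
lemma Ly_pscale: "Ly (sA c x) t = sT c (Ly x t)"
  by (rule eq_by_tp) (simp_all add: lin_scale_fun Ly_lin tp_simps caA(1)[symmetric] tp_scR)

lemma Lx_mul: "Lx x (P * t) = Lx x P * t"
proof -
  have s: "Lx x (tp u v * t) = Lx x (tp u v) * t" for u v
    by (rule eq_by_tp[where hA="\<lambda>t. Lx x (tp u v * t)"])
       (simp_all add: lin_comp Lx_lin lin_mulL tp_simps mult.assoc)
  show ?thesis
    by (rule eq_by_tp[where hA="\<lambda>P. Lx x (P * t)"]) (simp_all add: lin_comp[OF lin_mulR Lx_lin] lin_comp[OF Lx_lin lin_mulR] s)
qed
lemma Ly_mul: "Ly x (P * t) = Ly x P * t"
proof -
  have s: "Ly x (tp u v * t) = Ly x (tp u v) * t" for u v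
    by (rule eq_by_tp[where hA="\<lambda>t. Ly x (tp u v * t)"])
       (simp_all add: lin_comp Ly_lin lin_mulL tp_simps mult.assoc)
  show ?thesis
    by (rule eq_by_tp[where hA="\<lambda>P. Ly x (P * t)"]) (simp_all add: lin_comp[OF lin_mulR Ly_lin] lin_comp[OF Ly_lin lin_mulR] s)
qed
lemma Ry_mul: "Ry y P * t = P * Ly y t"
proof -
  have s: "Ry y (tp u v) * t = tp u v * Ly y t" for u v
    by (rule eq_by_tp[where hA="\<lambda>t. Ry y (tp u v) * t"])
       (simp_all add: lin_comp Ly_lin lin_mulL tp_simps mult.assoc)
  show ?thesis
    by (rule eq_by_tp[where hA="\<lambda>P. Ry y P * t"]) (simp_all add: lin_comp[OF lin_mulR Ry_lin] lin_comp[OF lin_mulL Ly_lin] lin_mulR s)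
qed
lemma Rx_mul: "Rx y P * t = P * Lx y t"
proof -
  have s: "Rx y (tp u v) * t = tp u v * Lx y t" for u v
    by (rule eq_by_tp[where hA="\<lambda>t. Rx y (tp u v) * t"])
       (simp_all add: lin_comp Lx_lin lin_mulL tp_simps mult.assoc)
  show ?thesis
    by (rule eq_by_tp[where hA="\<lambda>P. Rx y P * t"]) (simp_all add: lin_comp[OF lin_mulR Rx_lin] lin_comp[OF lin_mulL Lx_lin] lin_mulR s)
qed


lemma cop: "is_coproduct sA sT sS tp tp3 \<Delta>"
  using imb unfolding inf_mult_bialgebra_def by blast

lemma D_lin: "Vector_Spaces.linear sT sT (fst (\<Delta> x))"
  using cop unfolding is_coproduct_def is_multiplier_def by blast

lemmas D_l = linD[OF D_lin]

lemma D_lin_arg: "fst (\<Delta> (sA c x + y)) w = sT c (fst (\<Delta> x) w) + fst (\<Delta> y) w"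
proof -
  have "\<Delta> (sA c x + y) = (\<lambda>w. sT c (fst (\<Delta> x) w) + fst (\<Delta> y) w, \<lambda>w. sT c (snd (\<Delta> x) w) + snd (\<Delta> y) w)"
    using cop unfolding is_coproduct_def by blast
  then show ?thesis by simp
qed

lemma D_add: "fst (\<Delta> (x + y)) w = fst (\<Delta> x) w + fst (\<Delta> y) w"
  using D_lin_arg[of 1 x y w] by simp
lemma D_zero: "fst (\<Delta> 0) w = 0"
  using D_add[of 0 0 w] by simp
lemma D_scale: "fst (\<Delta> (sA c x)) w = sT c (fst (\<Delta> x) w)"
  using D_lin_arg[of c x 0 w] by (simp add: D_zero)
lemma D_diff: "fst (\<Delta> (x - y)) w = fst (\<Delta> x) w - fst (\<Delta> y) w"
proof -
  have "sA (-1) y + x = x - y" by simp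
  then show ?thesis using D_lin_arg[of "-1" y x w] by simp
qed

lemma D_der: "fst (\<Delta> (x * y)) w = fst (\<Delta> x) (Ly y w) + Lx x (fst (\<Delta> y) w)"
proof -
  have "\<Delta> (x * y) = madd (mprod (\<Delta> x) (one_ten sT tp y)) (mprod (ten_one sT tp x) (\<Delta> y))"
    using imb unfolding inf_mult_bialgebra_def by blast
  then show ?thesis by (simp add: madd_def mprod_def)
qed

lemma R_rng: "mprod (\<Delta> b) (ten_one sT tp a) \<in> range membed"
  and L_rng: "mprod (one_ten sT tp b) (\<Delta> a) \<in> range membed"
  using cop unfolding is_coproduct_def by blast+

abbreviation "R x a \<equiv> DeltaR sT tp \<Delta> x a"
abbreviation "DL a x \<equiv> DeltaL sT tp \<Delta> a x"

lemma R_mul: "R x a * t = fst (\<Delta> x) (Lx a t)"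
proof -
  have "membed (R x a) = mprod (\<Delta> x) (ten_one sT tp a)" unfolding DeltaR_def by (rule membed_melem[OF R_rng])
  then have "fst (membed (R x a)) t = fst (mprod (\<Delta> x) (ten_one sT tp a)) t" by simp
  then show ?thesis by (simp add: membed_def mprod_def)
qed

lemma DL_mul: "DL a x * t = Ly a (fst (\<Delta> x) t)"
proof -
  have "membed (DL a x) = mprod (one_ten sT tp a) (\<Delta> x)" unfolding DeltaL_def by (rule membed_melem[OF L_rng])
  then have "fst (membed (DL a x)) t = fst (mprod (one_ten sT tp a) (\<Delta> x)) t" by simp
  then show ?thesis by (simp add: membed_def mprod_def)
qed

lemma eqT: fixes P :: 't assumes "\<And>t. P * t = Q * t" shows "P = Q"
proof -
  have "\<And>t. (P - Q) * t = 0" using assms by (simp add: left_diff_distrib)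
  then have "P - Q = 0" by (rule nondegT)
  then show ?thesis by simp
qed

lemma R_add1: "R (x + x') a = R x a + R x' a"
  by (rule eqT) (simp add: R_mul distrib_right D_add)
lemma R_diff1: "R (x - x') a = R x a - R x' a"
  by (rule eqT) (simp add: R_mul left_diff_distrib D_diff)
lemma R_scale1: "R (sA c x) a = sT c (R x a)"
  by (rule eqT) (simp add: R_mul caT(1)[symmetric] D_scale)
lemma R_add2: "R x (a + a') = R x a + R x a'"
  by (rule eqT) (simp add: R_mul distrib_right Lx_padd D_l)
lemma R_scale2: "R x (sA c a) = sT c (R x a)"
  by (rule eqT) (simp add: R_mul caT(1)[symmetric] Lx_pscale D_l)
lemma R_der: "R (x * y) a = Ry y (R x a) + Lx x (R y a)"
  by (rule eqT) (simp add: R_mul distrib_right D_der Ry_mul Lx_mul[symmetric] Ly_Lx)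
lemma R_ax: "R y (a * x) = Rx x (R y a)"
  by (rule eqT) (simp add: R_mul Rx_mul Lx_mult)

lemma DL_add1: "DL a (x + x') = DL a x + DL a x'"
  by (rule eqT) (simp add: DL_mul distrib_right D_add Ly_l)
lemma DL_diff1: "DL a (x - x') = DL a x - DL a x'"
  by (rule eqT) (simp add: DL_mul left_diff_distrib D_diff Ly_l)
lemma DL_scale1: "DL a (sA c x) = sT c (DL a x)"
  by (rule eqT) (simp add: DL_mul caT(1)[symmetric] D_scale Ly_l)
lemma DL_add2: "DL (a + a') x = DL a x + DL a' x"
  by (rule eqT) (simp add: DL_mul distrib_right Ly_padd)
lemma DL_scale2: "DL (sA c a) x = sT c (DL a x)"
  by (rule eqT) (simp add: DL_mul caT(1)[symmetric] Ly_pscale)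
lemma DL_der: "DL a (x * y) = Ry y (DL a x) + Lx x (DL a y)"
  by (rule eqT) (simp add: DL_mul distrib_right D_der Ry_mul Lx_mul[symmetric] Ly_Lx Ly_l)
lemma DL_xa: "DL (x * a) y = Ly x (DL a y)"
  by (rule eqT) (simp add: DL_mul Ly_mul[symmetric] Ly_mult)

lemma bl_Bu: "bilin sT (\<lambda>x y. Lx x (fl (R y a)) - fl (R y (a * x)) + Ly y (R x a) - R x (a * y))"
  by (rule bilinT) (simp_all add: Lx_padd Lx_pscale Ly_padd Ly_pscale R_add1 R_add2 R_scale1 R_scale2
     distrib_left caA(2)[symmetric] fl_l Lx_l Ly_l T.scale_right_distrib T.scale_right_diff_distrib algebra_simps)

lemma bl_Bo: "bilin sT (\<lambda>x y. fl (DL (x * a) y) - fl (Rx x (DL a y)) + DL (y * a) x - Rx y (DL a x))"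
  by (rule bilinT) (simp_all add: Rx_padd Rx_pscale DL_add1 DL_add2 DL_scale1 DL_scale2
     distrib_right caA(1)[symmetric] fl_l Rx_l T.scale_right_distrib T.scale_right_diff_distrib algebra_simps)

lemma key: "(Ry y P + Lx x Q - (Ry x Q + Lx y P)) - fl (Ry y P + Lx x Q - (Ry x Q + Lx y P)) =
   dot x (Q - fl Q) - dot y (P - fl P) + (Lx x (fl Q) - Ry x (fl Q) + Ly y P - Rx y P)
   - (Lx y (fl P) - Ry y (fl P) + Ly x Q - Rx x Q)"
  by (simp add: fl_l dot_eq Lx_l Rx_l Ly_l Ry_l fl_Lx fl_Ly fl_Rx fl_Ry algebra_simps)

lemma main: "\<forall>a x y.
     delta_map sT tp \<Delta> a (commutator x y) =
       dot_act sT tp x (delta_map sT tp \<Delta> a y) - dot_act sT tp y (delta_map sT tp \<Delta> a x)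
       + bibal_under sT tp \<Delta> a (tp x y) - bibal_under sT tp \<Delta> a (tp y x)
   \<and> zeta_map sT tp \<Delta> a (commutator x y) =
       dot_act sT tp x (zeta_map sT tp \<Delta> a y) - dot_act sT tp y (zeta_map sT tp \<Delta> a x)
       + bibal_over sT tp \<Delta> a (tp x y) - bibal_over sT tp \<Delta> a (tp y x)"
proof (intro allI conjI)
  fix a x y
  have bu: "bibal_under sT tp \<Delta> a (tp u v) = Lx u (fl (R v a)) - Ry u (fl (R v a)) + Ly v (R u a) - Rx v (R u a)" for u v
    unfolding bibal_under_def tlin(2)[OF bl_Bu] by (simp add: R_ax fl_Rx)
  have bo: "bibal_over sT tp \<Delta> a (tp u v) = Lx u (fl (DL a v)) - Ry u (fl (DL a v)) + Ly v (DL a u) - Rx v (DL a u)" for u v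
    unfolding bibal_over_def tlin(2)[OF bl_Bo] by (simp add: DL_xa fl_Rx fl_Ly)
  show "delta_map sT tp \<Delta> a (commutator x y) =
       dot_act sT tp x (delta_map sT tp \<Delta> a y) - dot_act sT tp y (delta_map sT tp \<Delta> a x)
       + bibal_under sT tp \<Delta> a (tp x y) - bibal_under sT tp \<Delta> a (tp y x)"
    unfolding delta_map_def commutator_def bu R_diff1 R_der by (rule key)
  show "zeta_map sT tp \<Delta> a (commutator x y) =
       dot_act sT tp x (zeta_map sT tp \<Delta> a y) - dot_act sT tp y (zeta_map sT tp \<Delta> a x)
       + bibal_over sT tp \<Delta> a (tp x y) - bibal_over sT tp \<Delta> a (tp y x)"
    unfolding zeta_map_def commutator_def bo DL_diff1 DL_der by (rule key)
qed

end

theorem proposition3p2: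
  fixes sA :: "complex \<Rightarrow> 'a::ring \<Rightarrow> 'a"
    and sT :: "complex \<Rightarrow> 't::ring \<Rightarrow> 't"
    and sS :: "complex \<Rightarrow> 's::ab_group_add \<Rightarrow> 's"
    and tp :: "'a \<Rightarrow> 'a \<Rightarrow> 't"
    and tp3 :: "'t \<Rightarrow> 'a \<Rightarrow> 's"
    and \<Delta> :: "'a \<Rightarrow> 't mult"
  assumes "inf_mult_bialgebra sA sT sS tp tp3 \<Delta>"
  shows "\<forall>a x y.
     delta_map sT tp \<Delta> a (commutator x y) =
       dot_act sT tp x (delta_map sT tp \<Delta> a y) - dot_act sT tp y (delta_map sT tp \<Delta> a x)
       + bibal_under sT tp \<Delta> a (tp x y) - bibal_under sT tp \<Delta> a (tp y x)
   \<and> zeta_map sT tp \<Delta> a (commutator x y) =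
       dot_act sT tp x (zeta_map sT tp \<Delta> a y) - dot_act sT tp y (zeta_map sT tp \<Delta> a x)
       + bibal_over sT tp \<Delta> a (tp x y) - bibal_over sT tp \<Delta> a (tp y x)"
  by (rule imb.main[OF imb.intro[OF assms]])

end
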